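(* Let $Q_1,\dots,Q_k\colon\{0,1\}^m\to\{0,1\}$ and $Q^*\colon\{0,1\}^m\to S$ be functions with $S$ a finite set, and fix $\Gamma\colon\{0,1\}^k\times S\to\{0,1\}^n$. For $\sigma\in S$ let $\Gamma_\sigma\colon\{0,1\}^k\to\{0,1\}^n$ be $\Gamma_\sigma(x_1,\dots,x_k)=\Gamma(x_1,\dots,x_k,\sigma)$. Let $X$ be uniform on $\{0,1\}^m$ and $\mathcal{Y}$ a distribution on $\{0,1\}^n$ such that $\|\Gamma_\sigma(Q_1(X),\dots,Q_k(X))-\mathcal{Y}\|_{\mathtt{TV}}\ge1-\varepsilon$ for all $\sigma\in S$, and suppose $\Pr[Q^*(X)=\sigma]\ge\tau$ for all $\sigma\in S$. Then \[ \|\Gamma(Q_1(X),\dots,Q_k(X),Q^*(X))-\mathcal{Y}\|_{\mathtt{TV}}\ \ge\ 1-\frac{4\varepsilon|S|}{\tau}. \]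
   Context: Total variation distance: $\frac12\sum_x|\mathcal{D}_1(x)-\mathcal{D}_2(x)|$. *)

theory Defs
  imports "HOL-Analysis.Analysis" "HOL-Probability.Probability_Mass_Function"
begin

definition tv_dist :: "'a pmf \<Rightarrow> 'a pmf \<Rightarrow> real" where
  "tv_dist D1 D2 = (1/2) * infsum (\<lambda>x. \<bar>pmf D1 x - pmf D2 x\<bar>) UNIV"

definition bits :: "nat \<Rightarrow> bool list set" where
  "bits m = {xs. length xs = m}"

end

theory Submission
  imports Defs
begin



lemma prob_sum_fin:
  assumes "finite B" "set_pmf p \<subseteq> B"
  shows "measure_pmf.prob p A = sum (pmf p) (A \<inter> B)"
proof -
  have "measure_pmf.prob p A = measure_pmf.prob p (A \<inter> set_pmf p)"
    by (simp add: measure_Int_set_pmf)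
  also have "A \<inter> set_pmf p = (A \<inter> B) \<inter> set_pmf p" using assms by auto
  also have "measure_pmf.prob p \<dots> = measure_pmf.prob p (A \<inter> B)"
    by (simp add: measure_Int_set_pmf)
  finally show ?thesis using assms by (simp add: measure_measure_pmf_finite)
qed

lemma tv_fin:
  assumes "finite B" "set_pmf p \<subseteq> B" "set_pmf q \<subseteq> B"
  shows "tv_dist p q = 1/2 * (\<Sum>x\<in>B. \<bar>pmf p x - pmf q x\<bar>)"
proof -
  have "infsum (\<lambda>x. \<bar>pmf p x - pmf q x\<bar>) UNIV = infsum (\<lambda>x. \<bar>pmf p x - pmf q x\<bar>) B"
  proof (rule infsum_cong_neutral)
    fix x assume "x \<in> UNIV - B"
    then have "pmf p x = 0" "pmf q x = 0" using assms by (meson DiffD2 pmf_eq_0_set_pmf subsetD)+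
    then show "\<bar>pmf p x - pmf q x\<bar> = 0" by simp
  qed auto
  then show ?thesis using assms(1) by (simp add: tv_dist_def)
qed

lemma tv_ge:
  assumes "finite B" "set_pmf p \<subseteq> B" "set_pmf q \<subseteq> B"
  shows "measure_pmf.prob p A - measure_pmf.prob q A \<le> tv_dist p q"
proof -
  let ?d = "\<lambda>x. \<bar>pmf p x - pmf q x\<bar>"
  have s: "sum ?d B = sum ?d (B \<inter> A) + sum ?d (B - A)"
    using assms(1) by (metis sum.Int_Diff)
  have p1: "sum (pmf p) (B \<inter> A) + sum (pmf p) (B - A) = 1"
    using assms sum_pmf_eq_1[of B p] by (metis sum.Int_Diff)
  have q1: "sum (pmf q) (B \<inter> A) + sum (pmf q) (B - A) = 1"
    using assms sum_pmf_eq_1[of B q] by (metis sum.Int_Diff)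
  have a1: "sum (\<lambda>x. pmf p x - pmf q x) (B \<inter> A) \<le> sum ?d (B \<inter> A)"
    by (rule sum_mono) auto
  have a2: "sum (\<lambda>x. pmf q x - pmf p x) (B - A) \<le> sum ?d (B - A)"
    by (rule sum_mono) auto
  have "measure_pmf.prob p A = sum (pmf p) (B \<inter> A)"
    using prob_sum_fin[OF assms(1,2)] by (simp add: Int_commute)
  moreover have "measure_pmf.prob q A = sum (pmf q) (B \<inter> A)"
    using prob_sum_fin[OF assms(1,3)] by (simp add: Int_commute)
  ultimately show ?thesis using s p1 q1 a1 a2 tv_fin[OF assms]
    by (simp add: sum_subtractf)
qed

lemma tv_witness:
  assumes "finite B" "set_pmf p \<subseteq> B" "set_pmf q \<subseteq> B"
  shows "\<exists>A. tv_dist p q \<le> measure_pmf.prob p A - measure_pmf.prob q A"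
proof -
  define A where "A = {x. pmf q x \<le> pmf p x}"
  let ?d = "\<lambda>x. \<bar>pmf p x - pmf q x\<bar>"
  have s: "sum ?d B = sum ?d (B \<inter> A) + sum ?d (B - A)"
    using assms(1) by (metis sum.Int_Diff)
  have p1: "sum (pmf p) (B \<inter> A) + sum (pmf p) (B - A) = 1"
    using assms sum_pmf_eq_1[of B p] by (metis sum.Int_Diff)
  have q1: "sum (pmf q) (B \<inter> A) + sum (pmf q) (B - A) = 1"
    using assms sum_pmf_eq_1[of B q] by (metis sum.Int_Diff)
  have a1: "sum (\<lambda>x. pmf p x - pmf q x) (B \<inter> A) = sum ?d (B \<inter> A)"
    by (rule sum.cong) (auto simp: A_def)
  have a2: "sum (\<lambda>x. pmf q x - pmf p x) (B - A) = sum ?d (B - A)"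
    by (rule sum.cong) (auto simp: A_def)
  have "measure_pmf.prob p A = sum (pmf p) (B \<inter> A)"
    using prob_sum_fin[OF assms(1,2)] by (simp add: Int_commute)
  moreover have "measure_pmf.prob q A = sum (pmf q) (B \<inter> A)"
    using prob_sum_fin[OF assms(1,3)] by (simp add: Int_commute)
  ultimately have "tv_dist p q = measure_pmf.prob p A - measure_pmf.prob q A"
    using s p1 q1 a1 a2 tv_fin[OF assms] by (simp add: sum_subtractf)
  then show ?thesis by auto
qed

lemma finite_bits: "finite (bits n)"
  using finite_lists_length_eq[of "UNIV::bool set" n] by (simp add: bits_def)

lemma bits_ne: "bits n \<noteq> {}"
  by (auto simp: bits_def intro!: exI[of _ "replicate n True"])


theorem lemma3p6:
  fixes m k n :: nat
    and Q :: "nat \<Rightarrow> bool list \<Rightarrow> bool"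
    and Qs :: "bool list \<Rightarrow> 's"
    and S :: "'s set"
    and \<Gamma> :: "bool list \<Rightarrow> 's \<Rightarrow> bool list"
    and Y :: "bool list pmf"
    and \<epsilon> \<tau> :: real
  assumes S_fin: "finite S"
    and Qs_range: "\<And>x. x \<in> bits m \<Longrightarrow> Qs x \<in> S"
    and Gamma_range: "\<And>y \<sigma>. y \<in> bits k \<Longrightarrow> \<sigma> \<in> S \<Longrightarrow> \<Gamma> y \<sigma> \<in> bits n"
    and Y_supp: "set_pmf Y \<subseteq> bits n"
    and far: "\<And>\<sigma>. \<sigma> \<in> S \<Longrightarrow>
       tv_dist (map_pmf (\<lambda>x. \<Gamma> (map (\<lambda>i. Q i x) [1..<k+1]) \<sigma>) (pmf_of_set (bits m))) Y
         \<ge> 1 - \<epsilon>"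
    and tau_pos: "\<tau> > 0"
    and balanced: "\<And>\<sigma>. \<sigma> \<in> S \<Longrightarrow>
       measure_pmf.prob (pmf_of_set (bits m)) {x. Qs x = \<sigma>} \<ge> \<tau>"
  shows "tv_dist (map_pmf (\<lambda>x. \<Gamma> (map (\<lambda>i. Q i x) [1..<k+1]) (Qs x)) (pmf_of_set (bits m))) Y
         \<ge> 1 - 4 * \<epsilon> * real (card S) / \<tau>"
  proof -
  define U where "U = pmf_of_set (bits m)"
  have setU: "set_pmf U = bits m" using finite_bits bits_ne by (simp add: U_def)
  define g where "g x = map (\<lambda>i. Q i x) [1..<k+1]" for x
  have gk: "g x \<in> bits k" for x by (simp add: g_def bits_def)
  define D where "D \<sigma> = map_pmf (\<lambda>x. \<Gamma> (g x) \<sigma>) U" for \<sigma>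
  define Ds where "Ds = map_pmf (\<lambda>x. \<Gamma> (g x) (Qs x)) U"
  have suppD: "set_pmf (D \<sigma>) \<subseteq> bits n" if "\<sigma> \<in> S" for \<sigma>
    using that gk Gamma_range by (auto simp: D_def)
  have suppDs: "set_pmf Ds \<subseteq> bits n"
    using gk Gamma_range Qs_range by (auto simp: Ds_def setU)
  have "\<forall>\<sigma>\<in>S. \<exists>A. 1 - \<epsilon> \<le> measure_pmf.prob (D \<sigma>) A - measure_pmf.prob Y A"
  proof
    fix \<sigma> assume s: "\<sigma> \<in> S"
    obtain A where "tv_dist (D \<sigma>) Y \<le> measure_pmf.prob (D \<sigma>) A - measure_pmf.prob Y A"
      using tv_witness[OF finite_bits suppD[OF s] Y_supp] by blast
    moreover have "1 - \<epsilon> \<le> tv_dist (D \<sigma>) Y" using far[OF s] by (simp add: D_def g_def U_def)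
    ultimately show "\<exists>A. 1 - \<epsilon> \<le> measure_pmf.prob (D \<sigma>) A - measure_pmf.prob Y A"
      by (intro exI[of _ A]) linarith
  qed
  then obtain A where A: "\<And>\<sigma>. \<sigma> \<in> S \<Longrightarrow> 1 - \<epsilon> \<le> measure_pmf.prob (D \<sigma>) (A \<sigma>) - measure_pmf.prob Y (A \<sigma>)"
    by metis
  obtain x0 where x0: "x0 \<in> bits m" using bits_ne by blast
  define \<sigma>0 where "\<sigma>0 = Qs x0"
  have s0: "\<sigma>0 \<in> S" using Qs_range x0 by (simp add: \<sigma>0_def)
  have eps: "\<epsilon> \<ge> 0"
    using A[OF s0] measure_pmf.prob_le_1[of "D \<sigma>0" "A \<sigma>0"] measure_nonneg[of "measure_pmf Y" "A \<sigma>0"]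
    by linarith
  have tau1: "\<tau> \<le> 1"
    using balanced[OF s0] measure_pmf.prob_le_1[of "pmf_of_set (bits m)" "{x. Qs x = \<sigma>0}"] by linarith
  define AA where "AA = (\<Union>\<sigma>\<in>S. A \<sigma>)"
  have "measure_pmf.prob Y AA \<le> (\<Sum>\<sigma>\<in>S. measure_pmf.prob Y (A \<sigma>))"
    unfolding AA_def by (rule measure_pmf.finite_measure_subadditive_finite) (auto simp: S_fin)
  also have "\<dots> \<le> (\<Sum>\<sigma>\<in>S. \<epsilon>)"
  proof (rule sum_mono)
    fix \<sigma> assume "\<sigma> \<in> S"
    then show "measure_pmf.prob Y (A \<sigma>) \<le> \<epsilon>"
      using A[of \<sigma>] measure_pmf.prob_le_1[of "D \<sigma>" "A \<sigma>"] by linarith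
  qed
  finally have YA: "measure_pmf.prob Y AA \<le> real (card S) * \<epsilon>" by simp
  define B where "B = {x. \<Gamma> (g x) (Qs x) \<notin> AA}"
  have "measure_pmf.prob U B = measure_pmf.prob U (B \<inter> set_pmf U)"
    by (simp add: measure_Int_set_pmf)
  also have "\<dots> \<le> measure_pmf.prob U (\<Union>\<sigma>\<in>S. {x. \<Gamma> (g x) \<sigma> \<notin> A \<sigma>})"
    by (rule measure_pmf.finite_measure_mono) (auto simp: B_def setU AA_def dest: Qs_range)
  also have "\<dots> \<le> (\<Sum>\<sigma>\<in>S. measure_pmf.prob U {x. \<Gamma> (g x) \<sigma> \<notin> A \<sigma>})"
    by (rule measure_pmf.finite_measure_subadditive_finite) (auto simp: S_fin)
  also have "\<dots> \<le> (\<Sum>\<sigma>\<in>S. \<epsilon>)"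
  proof (rule sum_mono)
    fix \<sigma> assume s: "\<sigma> \<in> S"
    have "measure_pmf.prob U {x. \<Gamma> (g x) \<sigma> \<notin> A \<sigma>} = 1 - measure_pmf.prob (D \<sigma>) (A \<sigma>)"
      using measure_pmf.prob_compl[of "(\<lambda>x. \<Gamma> (g x) \<sigma>) -` A \<sigma>" U]
      by (simp add: D_def Compl_eq_Diff_UNIV[symmetric] vimage_def Collect_neg_eq)
    then show "measure_pmf.prob U {x. \<Gamma> (g x) \<sigma> \<notin> A \<sigma>} \<le> \<epsilon>"
      using A[OF s] measure_nonneg[of "measure_pmf Y" "A \<sigma>"] by linarith
  qed
  finally have UB: "measure_pmf.prob U B \<le> real (card S) * \<epsilon>" by simp
  have "measure_pmf.prob Ds AA = 1 - measure_pmf.prob U B"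
    using measure_pmf.prob_compl[of "(\<lambda>x. \<Gamma> (g x) (Qs x)) -` AA" U]
    by (simp add: Ds_def B_def Compl_eq_Diff_UNIV[symmetric] vimage_def Collect_neg_eq)
  then have "1 - 2 * real (card S) * \<epsilon> \<le> tv_dist Ds Y"
    using tv_ge[OF finite_bits suppDs Y_supp, of AA] UB YA by linarith
  moreover have "2 * real (card S) * \<epsilon> \<le> 4 * \<epsilon> * real (card S) / \<tau>"
  proof -
    have c: "0 \<le> \<epsilon> * real (card S)" using eps by simp
    have "\<epsilon> * real (card S) \<le> \<epsilon> * real (card S) / \<tau>"
      using c tau_pos tau1 by (simp add: le_divide_eq mult_left_le)
    moreover have "4 * \<epsilon> * real (card S) / \<tau> = 4 * (\<epsilon> * real (card S) / \<tau>)" by simp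
    moreover have "2 * real (card S) * \<epsilon> = 2 * (\<epsilon> * real (card S))" by simp
    ultimately show ?thesis using c by linarith
  qed
  ultimately show ?thesis by (simp add: Ds_def g_def U_def)
qed

end
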